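(* Let $X$ be a set, $B=(B,+,0)$ a unitary magma and $(A,k,q,s,p)$ a retraction point from $X$ to $B$. Then the map $\langle q,p\rangle\colon A\to X\times B$, $a\mapsto(q(a),p(a))$, is a bijection if and only if $q(k(x)+s(b))=x$ for all $x\in X$ and $b\in B$.
   Context: A unitary magma is a set with a binary operation $+$ and an element $0$ with $b+0=b=0+b$ for all $b$; morphisms preserve $+$ and $0$. Given a set $X$ and a unitary magma $B$, a retraction point from $X$ to $B$ is a tuple $(A,k,q,s,p)$ where $A=(A,+,0)$ is a unitary magma, $k\colon X\to A$ and $q\colon A\to X$ are maps, $s\colon B\to A$ and $p\colon A\to B$ are morphisms of unitary magmas, and $p(s(b))=b$, $q(k(x))=x$, $p(k(x))=0$, $q(s(b))=q(0)$, and $k(q(a))+s(p(a))=a$ for all $x\in X$, $b\in B$, $a\in A$. *)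

theory Defs
  imports Main
begin

definition unitary_magma :: "'a set \<Rightarrow> ('a \<Rightarrow> 'a \<Rightarrow> 'a) \<Rightarrow> 'a \<Rightarrow> bool" where
  "unitary_magma M add z \<longleftrightarrow>
     z \<in> M \<and> (\<forall>a\<in>M. \<forall>b\<in>M. add a b \<in> M) \<and>
     (\<forall>b\<in>M. add b z = b \<and> add z b = b)"

definition magma_hom ::
  "'a set \<Rightarrow> ('a \<Rightarrow> 'a \<Rightarrow> 'a) \<Rightarrow> 'a \<Rightarrow> 'b set \<Rightarrow> ('b \<Rightarrow> 'b \<Rightarrow> 'b) \<Rightarrow> 'b \<Rightarrow> ('a \<Rightarrow> 'b) \<Rightarrow> bool" where
  "magma_hom M addM zM N addN zN f \<longleftrightarrow>
     (\<forall>a\<in>M. f a \<in> N) \<and> (\<forall>a\<in>M. \<forall>b\<in>M. f (addM a b) = addN (f a) (f b)) \<and> f zM = zN"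

definition retraction_point ::
  "'x set \<Rightarrow> 'b set \<Rightarrow> ('b \<Rightarrow> 'b \<Rightarrow> 'b) \<Rightarrow> 'b \<Rightarrow>
   'a set \<Rightarrow> ('a \<Rightarrow> 'a \<Rightarrow> 'a) \<Rightarrow> 'a \<Rightarrow>
   ('x \<Rightarrow> 'a) \<Rightarrow> ('a \<Rightarrow> 'x) \<Rightarrow> ('b \<Rightarrow> 'a) \<Rightarrow> ('a \<Rightarrow> 'b) \<Rightarrow> bool" where
  "retraction_point X B addB zB A addA zA k q s p \<longleftrightarrow>
     unitary_magma A addA zA \<and>
     (\<forall>x\<in>X. k x \<in> A) \<and> (\<forall>a\<in>A. q a \<in> X) \<and>
     magma_hom B addB zB A addA zA s \<and> magma_hom A addA zA B addB zB p \<and>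
     (\<forall>b\<in>B. p (s b) = b) \<and> (\<forall>x\<in>X. q (k x) = x) \<and> (\<forall>x\<in>X. p (k x) = zB) \<and>
     (\<forall>b\<in>B. q (s b) = q zA) \<and> (\<forall>a\<in>A. addA (k (q a)) (s (p a)) = a)"

end

theory Submission
  imports Defs
begin

theorem proposition2p2:
  fixes X :: "'x set" and B :: "'b set" and addB :: "'b \<Rightarrow> 'b \<Rightarrow> 'b" and zB :: 'b
    and A :: "'a set" and addA :: "'a \<Rightarrow> 'a \<Rightarrow> 'a" and zA :: 'a
    and k :: "'x \<Rightarrow> 'a" and q :: "'a \<Rightarrow> 'x" and s :: "'b \<Rightarrow> 'a" and p :: "'a \<Rightarrow> 'b"
  assumes "unitary_magma B addB zB"
    and "retraction_point X B addB zB A addA zA k q s p"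
  shows "bij_betw (\<lambda>a. (q a, p a)) A (X \<times> B) \<longleftrightarrow>
         (\<forall>x\<in>X. \<forall>b\<in>B. q (addA (k x) (s b)) = x)"
proof -
  note R = assms(2)[unfolded retraction_point_def magma_hom_def unitary_magma_def]
  note U = assms(1)[unfolded unitary_magma_def]
  have inA: "addA (k x) (s b) \<in> A" if "x \<in> X" "b \<in> B" for x b
    using R that by blast
  have pP: "p (addA (k x) (s b)) = b" if "x \<in> X" "b \<in> B" for x b
  proof -
    have "p (addA (k x) (s b)) = addB (p (k x)) (p (s b))" using R that by blast
    also have "\<dots> = addB zB b" using R that by simp
    also have "\<dots> = b" using U that by blast
    finally show ?thesis .
  qed
  have decomp: "a = addA (k (q a)) (s (p a))" if "a \<in> A" for a using R that by simp
  show ?thesis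
  proof
    assume bij: "bij_betw (\<lambda>a. (q a, p a)) A (X \<times> B)"
    show "\<forall>x\<in>X. \<forall>b\<in>B. q (addA (k x) (s b)) = x"
    proof (intro ballI)
      fix x b assume xb: "x \<in> X" "b \<in> B"
      then obtain a where a: "a \<in> A" "(q a, p a) = (x, b)"
        using bij unfolding bij_betw_def by (metis (no_types, lifting) SigmaI image_iff)
      have "a = addA (k x) (s b)" using decomp[OF a(1)] a(2) by simp
      then show "q (addA (k x) (s b)) = x" using a(2) by simp
    qed
  next
    assume H: "\<forall>x\<in>X. \<forall>b\<in>B. q (addA (k x) (s b)) = x"
    show "bij_betw (\<lambda>a. (q a, p a)) A (X \<times> B)"
      unfolding bij_betw_def
    proof (intro conjI)
      show "inj_on (\<lambda>a. (q a, p a)) A"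
        by (rule inj_onI) (metis decomp prod.inject)
      show "(\<lambda>a. (q a, p a)) ` A = X \<times> B"
      proof
        show "(\<lambda>a. (q a, p a)) ` A \<subseteq> X \<times> B" using R by blast
        show "X \<times> B \<subseteq> (\<lambda>a. (q a, p a)) ` A"
        proof clarify
          fix x b assume xb: "x \<in> X" "b \<in> B"
          have "(x, b) = (q (addA (k x) (s b)), p (addA (k x) (s b)))"
            using H pP xb by simp
          then show "(x, b) \<in> (\<lambda>a. (q a, p a)) ` A" using inA[OF xb] by blast
        qed
      qed
    qed
  qed
qed

end
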